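(* Let $n$ be an even positive integer and $a$ a parameter. Let $L_n(a)$ be the $n\times n$ tridiagonal matrix with $(L_n(a))_{i,i}=ia$ for $1\le i\le n$, $(L_n(a))_{i,i+1}=n-i$ for $1\le i\le n-1$, $(L_n(a))_{i,i-1}=i-1$ for $2\le i\le n$, and all other entries $0$. Then the characteristic polynomial $\det(zI_n-L_n(a))$ of $L_n(a)$ equals $$\Lambda_n(a;z):=\prod_{\substack{1\le i<j\le n\\ i+j=n+1}}\left[(z-ia)(z-ja)-(i-j)^2\right].$$ *)

theory Defs
  imports "Jordan_Normal_Form.Determinant" "Jordan_Normal_Form.Char_Poly"
begin

text \<open>The n x n tridiagonal matrix L_n(a), with 0-based indices (row i, column j
  correspond to the paper's row i+1, column j+1).\<close>
definition L_mat :: "nat \<Rightarrow> 'a::comm_ring_1 \<Rightarrow> 'a mat" where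
  "L_mat n a = mat n n (\<lambda>(i,j).
     if j = i then of_nat (i+1) * a
     else if j = i + 1 then of_nat (n - (i+1))
     else if i = j + 1 then of_nat i
     else 0)"

definition Lambda_poly :: "nat \<Rightarrow> 'a::comm_ring_1 \<Rightarrow> 'a poly" where
  "Lambda_poly n a = (\<Prod>(i,j)\<in>{(i,j). 1 \<le> i \<and> i < j \<and> j \<le> n \<and> i + j = n + 1}.
      [:- (of_nat i * a), 1:] * [:- (of_nat j * a), 1:] - [:(of_int (int i - int j))^2:])"

end

theory Submission
  imports Defs
begin



definition Lf :: "nat \<Rightarrow> 'a::comm_ring_1 \<Rightarrow> nat \<Rightarrow> nat \<Rightarrow> 'a" where
  "Lf n a i j = (if j = i then of_nat (i+1) * a
     else if j = i + 1 then of_nat (n - (i+1))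
     else if i = j + 1 then of_nat i
     else 0)"

definition Rf :: "'a::comm_ring_1 \<Rightarrow> nat \<Rightarrow> nat \<Rightarrow> 'a" where
  "Rf a i k = (if k = i then 1 else if 2 \<le> i \<and> k + 1 = i then -a
     else if 2 \<le> i \<and> k + 2 = i then -1 else 0)"

definition Df :: "nat \<Rightarrow> 'a::comm_ring_1 \<Rightarrow> nat \<Rightarrow> nat \<Rightarrow> 'a" where
  "Df n a i k = (if i = 0 then (if k = 0 then a else if k = 1 then of_nat (n-1) else 0)
    else if i = 1 then (if k = 0 then of_nat (n-1) else if k = 1 then of_nat n * a
       else if k = 2 then of_nat (n-2) else 0)
    else (if k = i then of_nat i * a else if k = i+1 then of_nat (n-1-i)
       else if k + 1 = i then of_nat (i-2) else 0))"

lemma sum3: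
  fixes F G :: "nat \<Rightarrow> 'a::comm_ring_1"
  assumes "\<And>k. F k = (if k = p1 then c1 else 0) + (if k = p2 then c2 else 0) + (if k = p3 then c3 else 0)"
  shows "(\<Sum>k\<in>{0..<n}. F k * G k) = (if p1<n then c1*G p1 else 0) + (if p2<n then c2*G p2 else 0) + (if p3<n then c3*G p3 else 0)"
proof -
  have d: "(\<Sum>k\<in>{0..<n}. (if k = p then c else 0) * G k) = (if p<n then c * G p else 0)" for p c
  proof -
    have e: "(\<lambda>k. (if k = p then c else 0) * G k) = (\<lambda>k. if p = k then c * G p else 0)" by auto
    show ?thesis by (simp only: e) (simp add: sum.delta)
  qed
  show ?thesis unfolding assms distrib_right sum.distrib d ..
qed

lemma RL_sum:
  assumes "i < n"
  shows "(\<Sum>k\<in>{0..<n}. Rf a i k * Lf n a k j) =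
     Lf n a i j - (if 2 \<le> i then a * Lf n a (i-1) j + Lf n a (i-2) j else 0)"
proof -
  have "(\<Sum>k\<in>{0..<n}. Rf a i k * Lf n a k j) =
     (if i<n then 1*Lf n a i j else 0) + (if i-1<n then (if 2 \<le> i then -a else 0)*Lf n a (i-1) j else 0)
     + (if i-2<n then (if 2 \<le> i then -1 else 0)*Lf n a (i-2) j else 0)"
    by (rule sum3, auto simp: Rf_def)
  then show ?thesis using assms by auto
qed

definition "Dp1 (i::nat)  = (if i < 2 then 0 else i)"
definition "Dc1 n a i = (if i = 0 then a else if i = 1 then of_nat (n-1) else of_nat i * a)"
definition "Dp2 (i::nat)  = (if i < 2 then 1 else i+1)"
definition "Dc2 n a i = (if i = 0 then of_nat (n-1) else if i = 1 then of_nat n * a else of_nat (n-1-i))"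
definition "Dp3 (i::nat)  = (if i < 2 then 2 else i-1)"
definition "Dc3 n (a::'a::comm_ring_1) i = (if i = 0 then 0 else if i = 1 then of_nat (n-2) else of_nat (i-2))"

lemma DR_sum:
  shows "(\<Sum>k\<in>{0..<n}. Df n a i k * Rf a k j) =
     (if Dp1 i<n then Dc1 n a i*Rf a (Dp1 i) j else 0) + (if Dp2 i<n then Dc2 n a i*Rf a (Dp2 i) j else 0)
       + (if Dp3 i<n then Dc3 n a i*Rf a (Dp3 i) j else 0)"
  apply (rule sum3)
  apply (cases "i = 0"; cases "i = 1")
  apply (auto simp: Df_def Dp1_def Dp2_def Dp3_def Dc1_def Dc2_def Dc3_def)
  done

lemma RL_DR:
  fixes a :: "'a::comm_ring_1"
  assumes "i < n" "j < n" "2 \<le> n"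
  shows "Lf n a i j - (if 2 \<le> i then a * Lf n a (i-1) j + Lf n a (i-2) j else 0) =
     (if Dp1 i<n then Dc1 n a i*Rf a (Dp1 i) j else 0) + (if Dp2 i<n then Dc2 n a i*Rf a (Dp2 i) j else 0)
       + (if Dp3 i<n then Dc3 n a i*Rf a (Dp3 i) j else 0)"
proof -
  consider "i = 0" | "i = 1" | "2 \<le> i" by linarith
  then show ?thesis
  proof cases
    case 1
    then show ?thesis using assms by (auto simp: Lf_def Rf_def Dp1_def Dp2_def Dp3_def Dc1_def Dc2_def Dc3_def)
  next
    case 2
    then show ?thesis using assms by (auto simp: Lf_def Rf_def Dp1_def Dp2_def Dp3_def Dc1_def Dc2_def Dc3_def of_nat_diff algebra_simps)
  next
    case 3
    then obtain q where q: "i = q + 2" by (metis add.commute le_add_diff_inverse)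
    have s: "Dp1 i = i" "Dp2 i = i + 1" "Dp3 i = i - 1" "Dc1 n a i = of_nat i * a" "Dc2 n a i = of_nat (n-1-i)" 
       "Dc3 n a i = of_nat (i-2)" using 3 by (auto simp: Dp1_def Dp2_def Dp3_def Dc1_def Dc2_def Dc3_def)
    have jc: "j = i+1 \<or> j = i \<or> j+1 = i \<or> j+2=i \<or> j+3=i \<or> j>i+1 \<or> j+3<i" by linarith
    consider (lt) "i+1<n" | (eq) "n = q+3" using assms q by linarith
    then show ?thesis
    proof cases
      case lt
      from jc show ?thesis using assms q lt unfolding s by (elim disjE; cases "q = 0"; auto simp: Lf_def Rf_def of_nat_diff algebra_simps)
    next
      case eq
      from jc show ?thesis using assms q eq unfolding s by (elim disjE; cases "q = 0"; auto simp: Lf_def Rf_def of_nat_diff algebra_simps)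
    qed
  qed
qed



interpretation cpoly: comm_ring_hom "\<lambda>x::'a::comm_ring_1. [:x:]"
  by unfold_locales (auto simp: mult_to_poly one_pCons)

lemma char_poly_conj:
  fixes A B R :: "'a::comm_ring_1 mat"
  assumes A: "A \<in> carrier_mat n n" and B: "B \<in> carrier_mat n n" and R: "R \<in> carrier_mat n n"
    and RA: "R * A = B * R"
    and up: "\<And>i j. i<j \<Longrightarrow> j<n \<Longrightarrow> R$$(i,j) = 0" and dg: "\<And>i. i<n \<Longrightarrow> R$$(i,i) = 1"
  shows "char_poly A = char_poly B"
proof -
  let ?c = "map_mat (\<lambda>x::'a. [:x:])"
  let ?X = "[:0,1:] :: 'a poly"
  have cpm: "char_poly_matrix M = ?X \<cdot>\<^sub>m 1\<^sub>m n + ?c (- M)" if "M \<in> carrier_mat n n" for M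
    using that by (intro eq_matI) (auto simp: char_poly_matrix_def)
  have cR: "?c R \<in> carrier_mat n n" using R by simp
  have e1: "?c R * char_poly_matrix A = ?X \<cdot>\<^sub>m ?c R + ?c (- (R * A))"
    unfolding cpm[OF A] using A R
    apply (subst mult_add_distrib_mat[of _ n n])
       apply auto[3]
    apply (subst mult_smult_distrib[of _ n n])
      apply auto[2]
    apply (subst cpoly.mat_hom_mult[symmetric, of _ n n])
      apply auto[2]
    apply (subst uminus_mult_right_mat)
     apply auto
    done
  have e2: "char_poly_matrix B * ?c R = ?X \<cdot>\<^sub>m ?c R + ?c (- (B * R))"
    unfolding cpm[OF B] using B R
    by (simp add: add_mult_distrib_mat[of _ n n] mult_smult_assoc_mat[of _ n n] cpoly.mat_hom_mult[symmetric, of _ n n] uminus_mult_left_mat)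
  have dR: "det R = 1"
  proof -
    have "det R = prod_list (diag_mat R)" by (rule det_lower_triangular[OF _ R]) (use up in auto)
    also have "diag_mat R = map (\<lambda>i. 1) [0..<n]" using R dg by (auto simp: diag_mat_def)
    moreover have "prod_list (map (\<lambda>i. (1::'a)) xs) = 1" for xs :: "nat list" by (induct xs) auto
    ultimately show ?thesis by simp
  qed
  have "det (?c R) * char_poly A = char_poly B * det (?c R)"
    unfolding char_poly_def det_mult[OF cR char_poly_matrix_closed[OF A], symmetric]
      det_mult[OF char_poly_matrix_closed[OF B] cR, symmetric] e1 e2 RA ..
  moreover have "det (?c R) = 1" using dR by simp
  ultimately show ?thesis by (simp add: dR)
qed


lemma det_1x1: "det (mat (Suc 0) (Suc 0) f) = f (0,0)"
  by (subst det_upper_triangular[of _ 1]) (auto simp: upper_triangular_def diag_mat_def)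

lemma char_poly_shift:
  fixes A :: "'a::comm_ring_1 mat"
  assumes A: "A \<in> carrier_mat n n"
  shows "char_poly (A + a \<cdot>\<^sub>m 1\<^sub>m n) = char_poly A \<circ>\<^sub>p [:-a,1:]"
proof -
  have e: "char_poly_matrix (A + a \<cdot>\<^sub>m 1\<^sub>m n) = map_mat (\<lambda>p. p \<circ>\<^sub>p [:-a,1:]) (char_poly_matrix A)"
    using A by (intro eq_matI) (auto simp: char_poly_matrix_def pcompose_pCons)
  have h: "comm_ring_hom (\<lambda>p::'a poly. p \<circ>\<^sub>p [:-a,1:])"
    by unfold_locales (auto simp: pcompose_add pcompose_mult)
  show ?thesis unfolding char_poly_def e using comm_ring_hom.hom_det[OF h, of "char_poly_matrix A"] by simp
qed



definition "Rm n a = mat n n (\<lambda>(i,k). Rf a i k)"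
definition "Dm n a = mat n n (\<lambda>(i,k). Df n a i k)"

lemma L_idx: "i < n \<Longrightarrow> j < n \<Longrightarrow> L_mat n a $$ (i,j) = Lf n a i j"
  by (simp add: L_mat_def Lf_def)

lemma L_dims[simp]: "dim_row (L_mat n a) = n" "dim_col (L_mat n a) = n" "L_mat n a \<in> carrier_mat n n"
  by (auto simp: L_mat_def)

lemma RL_eq:
  fixes a :: "'a::comm_ring_1"
  assumes n: "2 \<le> n"
  shows "Rm n a * L_mat n a = Dm n a * Rm n a"
proof (rule eq_matI)
  fix i j assume i: "i < dim_row (Dm n a * Rm n a)" and j: "j < dim_col (Dm n a * Rm n a)"
  then have i: "i < n" and j: "j < n" by (auto simp: Dm_def Rm_def)
  have "(Rm n a * L_mat n a) $$ (i,j) = (\<Sum>k\<in>{0..<n}. Rf a i k * Lf n a k j)"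
    using i j by (auto simp: Rm_def L_idx index_mult_mat scalar_prod_def intro!: sum.cong)
  also have "\<dots> = (\<Sum>k\<in>{0..<n}. Df n a i k * Rf a k j)"
    unfolding RL_sum[OF i] DR_sum using RL_DR[OF i j n] .
  also have "\<dots> = (Dm n a * Rm n a) $$ (i,j)"
    using i j by (auto simp: Rm_def Dm_def index_mult_mat scalar_prod_def intro!: sum.cong)
  finally show "(Rm n a * L_mat n a) $$ (i,j) = (Dm n a * Rm n a) $$ (i,j)" .
qed (auto simp: Dm_def Rm_def L_mat_def)

lemma cp_L_D:
  fixes a :: "'a::comm_ring_1"
  assumes n: "2 \<le> n"
  shows "char_poly (L_mat n a) = char_poly (Dm n a)"
  by (rule char_poly_conj[of _ n _ "Rm n a"], use RL_eq[OF n] in \<open>auto simp: Rm_def Dm_def L_mat_def Rf_def\<close>)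


lemma Df_block:
  assumes "2 \<le> i" "2 \<le> k" "i < N+2" "k < N+2"
  shows "Df (N+2) a i k = Lf N a (i-2) (k-2) + (if i = k then a else 0)"
  using assms by (auto simp: Df_def Lf_def of_nat_diff algebra_simps)

lemma det_D:
  fixes a :: "'a::comm_ring_1"
  shows "char_poly (Dm (N+2) a) = ([:-a,1:] * [:-(of_nat (N+2) * a),1:] - [:of_nat (N+1) ^ 2:])
     * char_poly (L_mat N a + a \<cdot>\<^sub>m 1\<^sub>m N)"
proof -
  define n where "n = N + 2"
  define M where "M = char_poly_matrix (Dm n a)"
  define CE where "CE = char_poly_matrix (L_mat N a + a \<cdot>\<^sub>m 1\<^sub>m N)"
  let ?X = "[:0,1:] :: 'a poly"
  have M: "M \<in> carrier_mat n n" by (simp add: M_def Dm_def)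
  have CE: "CE \<in> carrier_mat N N" by (simp add: CE_def)
  have Mi: "M $$ (i,k) = (if i = k then ?X else 0) + [:- Df n a i k:]" if "i < n" "k < n" for i k
    using that by (simp add: M_def Dm_def char_poly_matrix_def)
  have CEi: "CE $$ (i,k) = (if i = k then ?X else 0) + [:- (Lf N a i k + (if i = k then a else 0)):]" if "i < N" "k < N" for i k
    using that by (simp add: CE_def char_poly_matrix_def L_idx)
  have "det M = (\<Sum>i<n. M $$ (i,0) * cofactor M i 0)"
    by (rule laplace_expansion_column[OF M]) (simp add: n_def)
  also have "\<dots> = M $$ (0,0) * cofactor M 0 0 + M $$ (1,0) * cofactor M 1 0"
  proof -
    have z: "M $$ (Suc (Suc i), 0) = 0" if "i < N" for i
      using that by (simp add: Mi n_def Df_def)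
    show ?thesis unfolding n_def add_2_eq_Suc' sum.lessThan_Suc_shift by (simp add: z del: sum.lessThan_Suc)
  qed
  finally have detM: "det M = M $$ (0,0) * cofactor M 0 0 + M $$ (1,0) * cofactor M 1 0" .
  have del0: "mat_delete M 0 0 = four_block_mat (mat 1 1 (\<lambda>_. ?X + [:- (of_nat n * a):]))
      (mat 1 N (\<lambda>(_,j). if j = 0 then [:- of_nat (n-2):] else 0)) (0\<^sub>m N 1) CE"
  proof (rule eq_matI)
    fix i j assume "i < dim_row (four_block_mat (mat 1 1 (\<lambda>_. ?X + [:- (of_nat n * a):]))
      (mat 1 N (\<lambda>(_,j). if j = 0 then [:- of_nat (n-2):] else 0)) (0\<^sub>m N 1) CE)"
      "j < dim_col (four_block_mat (mat 1 1 (\<lambda>_. ?X + [:- (of_nat n * a):]))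
      (mat 1 N (\<lambda>(_,j). if j = 0 then [:- of_nat (n-2):] else 0)) (0\<^sub>m N 1) CE)"
    then have i: "i < N+1" and j: "j < N+1" using CE by auto
    show "mat_delete M 0 0 $$ (i, j) = four_block_mat (mat 1 1 (\<lambda>_. ?X + [:- (of_nat n * a):]))
      (mat 1 N (\<lambda>(_,j). if j = 0 then [:- of_nat (n-2):] else 0)) (0\<^sub>m N 1) CE $$ (i, j)"
    proof -
      have d: "mat_delete M 0 0 $$ (i, j) = M $$ (Suc i, Suc j)" using i j M by (simp add: mat_delete_def n_def)
      show ?thesis
      proof (cases i)
        case 0
        then show ?thesis using i j CE unfolding d by (cases j) (auto simp: Mi n_def Df_def)
      next
        case (Suc i')
        show ?thesis
        proof (cases j)
          case 0
          then show ?thesis using i j Suc CE unfolding d by (auto simp: Mi n_def Df_def)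
        next
          case (Suc j')
          have "Df n a (Suc i) (Suc j) = Lf N a i' j' + (if i' = j' then a else 0)"
            unfolding n_def using Df_block[of "Suc i" "Suc j" N a] i j \<open>i = Suc i'\<close> Suc by auto
          then show ?thesis using i j Suc \<open>i = Suc i'\<close> CE unfolding d by (auto simp: Mi CEi n_def)
        qed
      qed
    qed
  qed (use M CE in \<open>auto simp: n_def\<close>)
  have del1: "mat_delete M 1 0 = four_block_mat (mat 1 1 (\<lambda>_. [:- of_nat (n-1):]))
      (0\<^sub>m 1 N) (0\<^sub>m N 1) CE"
  proof (rule eq_matI)
    fix i j assume "i < dim_row (four_block_mat (mat 1 1 (\<lambda>_. [:- of_nat (n-1):]))
      (0\<^sub>m 1 N) (0\<^sub>m N 1) CE)"
      "j < dim_col (four_block_mat (mat 1 1 (\<lambda>_. [:- of_nat (n-1):]))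
      (0\<^sub>m 1 N) (0\<^sub>m N 1) CE)"
    then have i: "i < N+1" and j: "j < N+1" using CE by auto
    show "mat_delete M 1 0 $$ (i, j) = four_block_mat (mat 1 1 (\<lambda>_. [:- of_nat (n-1):]))
      (0\<^sub>m 1 N) (0\<^sub>m N 1) CE $$ (i, j)"
    proof (cases i)
      case 0
      have d: "mat_delete M 1 0 $$ (i, j) = M $$ (0, Suc j)" using i j M 0 by (simp add: mat_delete_def n_def)
      show ?thesis using i j CE 0 unfolding d by (cases j) (auto simp: Mi n_def Df_def)
    next
      case (Suc i')
      have d: "mat_delete M 1 0 $$ (i, j) = M $$ (Suc i, Suc j)" using i j M Suc by (simp add: mat_delete_def n_def)
      show ?thesis
      proof (cases j)
        case 0
        then show ?thesis using i j Suc CE unfolding d by (auto simp: Mi n_def Df_def)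
      next
        case (Suc j')
        have "Df n a (Suc i) (Suc j) = Lf N a i' j' + (if i' = j' then a else 0)"
          unfolding n_def using Df_block[of "Suc i" "Suc j" N a] i j \<open>i = Suc i'\<close> Suc by auto
        then show ?thesis using i j Suc \<open>i = Suc i'\<close> CE unfolding d by (auto simp: Mi CEi n_def)
      qed
    qed
  qed (use M CE in \<open>auto simp: n_def\<close>)
  have c0: "cofactor M 0 0 = (?X + [:- (of_nat n * a):]) * det CE"
    unfolding cofactor_def del0
    by (subst det_four_block_mat_lower_left_zero_col[OF _ _ refl CE]) (auto simp: det_1x1)
  have c1: "cofactor M 1 0 = - ([:- of_nat (n-1):] * det CE)"
    unfolding cofactor_def del1
    by (subst det_four_block_mat_lower_left_zero_col[OF _ _ refl CE]) (auto simp: det_1x1)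
  have m00: "M $$ (0,0) = ?X + [:-a:]" by (simp add: Mi n_def Df_def)
  have m10: "M $$ (1,0) = [:- of_nat (n-1):]" by (simp add: Mi n_def Df_def)
  have "char_poly (Dm n a) = det M" by (simp add: M_def char_poly_def)
  also have "\<dots> = ((?X + [:-a:]) * (?X + [:- (of_nat n * a):]) - [:- of_nat (n-1):] * [:- of_nat (n-1):]) * det CE"
  proof -
    have r: "x*(y*c) + r*(-(r*c)) = (x*y - r*r)*c" for x y r c :: "'a poly" by (simp add: algebra_simps)
    show ?thesis unfolding detM c0 c1 m00 m10 r ..
  qed
  also have "(?X + [:-a:]) * (?X + [:- (of_nat n * a):]) - [:- of_nat (n-1):] * [:- of_nat (n-1):] =
     [:-a,1:] * [:-(of_nat (N+2) * a),1:] - [:of_nat (N+1) ^ 2:]"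
    by (simp add: n_def mult_to_poly power2_eq_square algebra_simps)
  finally show ?thesis by (simp add: CE_def char_poly_def n_def)
qed


lemma Lambda_rec:
  fixes a :: "'a::comm_ring_1"
  shows "Lambda_poly (N+2) a = ([:-a,1:] * [:-(of_nat (N+2) * a),1:] - [:of_nat (N+1) ^ 2:])
     * (Lambda_poly N a \<circ>\<^sub>p [:-a,1:])"
proof -
  define S where "S n = {(i,j). 1 \<le> i \<and> i < j \<and> j \<le> n \<and> i + j = n + 1}" for n :: nat
  define f where "f = (\<lambda>(i::nat,j::nat). [:- (of_nat i * a), 1:] * [:- (of_nat j * a), 1:] - [:(of_int (int i - int j))^2:])"
  have L: "Lambda_poly n a = prod f (S n)" for n unfolding Lambda_poly_def S_def f_def ..
  let ?sh = "\<lambda>(i::nat,j::nat). (Suc i, Suc j)"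
  have SS1: "x \<in> insert (1, N+2) (?sh ` S N)" if "x \<in> S (N+2)" for x
  proof -
    from that obtain i j where x: "x = (i,j)" and h: "1 \<le> i" "i < j" "j \<le> N+2" "i + j = N+3" by (auto simp: S_def)
    show "x \<in> insert (1, N+2) (?sh ` S N)"
    proof (cases "i = 1")
      case True then show ?thesis using h x by auto
    next
      case False
      then have "(i-1, j-1) \<in> S N" using h by (auto simp: S_def)
      moreover have "x = ?sh (i-1,j-1)" using h x False by auto
      ultimately show ?thesis by blast
    qed
  qed
  have SS2: "insert (1, N+2) (?sh ` S N) \<subseteq> S (N+2)" by (auto simp: S_def)
  have SS: "S (N+2) = insert (1, N+2) (?sh ` S N)" using SS1 SS2 by blast
  have fin: "finite (S N)" by (rule finite_subset[of _ "{..N} \<times> {..N}"]) (auto simp: S_def)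
  have nin: "(1, N+2) \<notin> ?sh ` S N" by (auto simp: S_def)
  have inj: "inj_on ?sh (S N)" by (auto simp: inj_on_def)
  have fsh: "f (?sh x) = f x \<circ>\<^sub>p [:-a,1:]" for x
    by (cases x) (simp add: f_def pcompose_pCons algebra_simps)
  have f1: "f (1, N+2) = [:-a,1:] * [:-(of_nat (N+2) * a),1:] - [:of_nat (N+1) ^ 2:]"
    by (simp add: f_def power2_eq_square algebra_simps)
  show ?thesis
    unfolding L SS prod.insert[OF finite_imageI[OF fin] nin] prod.reindex[OF inj] f1
    by (simp add: pcompose_prod fsh)
qed


lemma main_even:
  fixes a :: "'a::comm_ring_1"
  shows "char_poly (L_mat (2*k) a) = Lambda_poly (2*k) a"
proof (induction k)
  case 0
  have "char_poly (L_mat 0 a) = 1" unfolding char_poly_def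
    by (rule det_dim_zero) (simp add: char_poly_matrix_def L_mat_def)
  moreover have "Lambda_poly 0 a = 1" unfolding Lambda_poly_def
  proof -
    have "{(i,j). 1 \<le> i \<and> i < j \<and> j \<le> (0::nat) \<and> i + j = 0 + 1} = {}" by auto
    then show "(\<Prod>(i,j)\<in>{(i,j). 1 \<le> i \<and> i < j \<and> j \<le> (0::nat) \<and> i + j = 0 + 1}.
      [:- (of_nat i * a), 1:] * [:- (of_nat j * a), 1:] - [:(of_int (int i - int j))^2:]) = 1"
      by (simp only: prod.empty)
  qed
  ultimately show ?case by simp
next
  case (Suc k)
  define N where "N = 2*k"
  have e: "2 * Suc k = N + 2" by (simp add: N_def)
  have "char_poly (L_mat (N+2) a) = char_poly (Dm (N+2) a)" by (rule cp_L_D) simp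
  also have "\<dots> = ([:-a,1:] * [:-(of_nat (N+2) * a),1:] - [:of_nat (N+1) ^ 2:])
     * (char_poly (L_mat N a) \<circ>\<^sub>p [:-a,1:])"
    unfolding det_D char_poly_shift[OF L_dims(3)] ..
  also have "\<dots> = Lambda_poly (N+2) a" unfolding Lambda_rec Suc.IH[folded N_def] ..
  finally show ?case unfolding e .
qed

theorem lemmaA3:
  fixes a :: "'a::comm_ring_1" and n :: nat
  assumes "even n" and "n > 0"
  shows "char_poly (L_mat n a) = Lambda_poly n a"
proof -
  from assms(1) obtain k where "n = 2*k" by (auto elim: evenE)
  then show ?thesis using main_even by simp
qed


end
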